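(* Let $\mathcal H$ be a real Hilbert space, $t_0>0$, let $f:\mathcal H\to\mathbb R$ be convex and $\mathcal C^1$ with $L$-Lipschitz continuous gradient and nonempty set of minimizers. Let $\alpha>3$, $\gamma>0$, $\beta\ge0$, $\beta(t)=\gamma+\beta/t$, let $b\in]0,\alpha-1]$ and $$a(t)=t^2\left(1+\frac{(\alpha-b)\gamma t-\beta(\alpha+1-b)}{t^2-\alpha\gamma t-\beta(\alpha+1)}\right),\qquad m(t)=\max\big(t,\,L|a(t)\beta(t)|,\,L|a(t)|\beta(t)^2\big).$$ Let $e\in\mathcal C([t_0,+\infty[;\mathcal H)$ with $m(\cdot)e(\cdot)\in L^1(t_0,+\infty;\mathcal H)$, and let $x$ be a solution of $$\ddot x(t)+\frac\alpha t\dot x(t)+\nabla f\big(x(t)+\beta(t)\dot x(t)\big)+e(t)=0.$$ Then: (i) $f(x(t)+\beta(t)\dot x(t))-\min_{\mathcal H}f=\mathcal O(1/t^2)$ as $t\to+\infty$; (ii) $\|\dot x(t)\|=\mathcal O(1/t)$ as $t\to+\infty$; (iii) $\int_{t_0}^{+\infty}t\,(f(x(t))-\min_{\mathcal H}f)dt<+\infty$; (iv) $\int_{t_0}^{+\infty}t^2\|\nabla f(x(t)+\beta(t)\dot x(t))\|^2dt<+\infty$; (v) $\int_{t_0}^{+\infty}t\|\dot x(t)\|^2dt<+\infty$. *)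

theory Defs
  imports "HOL-Analysis.Analysis" "HOL-Library.Landau_Symbols"
begin

definition beta_fun :: "real \<Rightarrow> real \<Rightarrow> real \<Rightarrow> real" where
  "beta_fun \<gamma> \<beta> t = \<gamma> + \<beta> / t"

text \<open>a(t) as in the paper (division by zero yields 0 in HOL; only finitely many t).\<close>
definition a_fun :: "real \<Rightarrow> real \<Rightarrow> real \<Rightarrow> real \<Rightarrow> real \<Rightarrow> real" where
  "a_fun \<alpha> \<gamma> \<beta> b t =
     t^2 * (1 + ((\<alpha> - b) * \<gamma> * t - \<beta> * (\<alpha> + 1 - b)) /
                (t^2 - \<alpha> * \<gamma> * t - \<beta> * (\<alpha> + 1)))"

definition m_fun :: "real \<Rightarrow> real \<Rightarrow> real \<Rightarrow> real \<Rightarrow> real \<Rightarrow> real \<Rightarrow> real" where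
  "m_fun L \<alpha> \<gamma> \<beta> b t =
     max t (max (L * \<bar>a_fun \<alpha> \<gamma> \<beta> b t * beta_fun \<gamma> \<beta> t\<bar>)
                (L * \<bar>a_fun \<alpha> \<gamma> \<beta> b t\<bar> * (beta_fun \<gamma> \<beta> t)^2))"

end

theory Submission
  imports Defs "HOL-Real_Asymp.Real_Asymp"
begin


lemma grad_chain:
  fixes f :: "'a::real_inner \<Rightarrow> real"
  assumes grad: "\<And>y. (f has_derivative (\<lambda>h. g y \<bullet> h)) (at y)"
    and zd: "(z has_vector_derivative z') (at t within S)"
  shows "((\<lambda>s. f (z s)) has_real_derivative (g (z t) \<bullet> z')) (at t within S)"
proof -
  have fd: "(f has_derivative (\<lambda>h. g (z t) \<bullet> h)) (at (z t) within z ` S)"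
    using grad[of "z t"] by (rule has_derivative_subset) simp
  have zd': "(z has_derivative (\<lambda>h. h *\<^sub>R z')) (at t within S)"
    using zd by (simp add: has_vector_derivative_def)
  have "((f o z) has_derivative ((\<lambda>h. g (z t) \<bullet> h) o (\<lambda>h. h *\<^sub>R z'))) (at t within S)"
    by (rule diff_chain_within[OF zd' fd])
  then show ?thesis unfolding has_field_derivative_def comp_def
    by (rule has_derivative_eq_rhs) (auto simp: fun_eq_iff)
qed

lemma inner_sq_deriv:
  assumes "(u has_vector_derivative u') (at t within S)"
  shows "((\<lambda>s. u s \<bullet> u s) has_real_derivative 2 * (u t \<bullet> u')) (at t within S)"
proof -
  have d: "(u has_derivative (\<lambda>h. h *\<^sub>R u')) (at t within S)"
    using assms by (simp add: has_vector_derivative_def)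
  show ?thesis unfolding has_field_derivative_def
    by (rule has_derivative_eq_rhs[OF has_derivative_inner[OF d d]])
       (auto simp: fun_eq_iff inner_commute algebra_simps)
qed

lemma convex_tangent:
  fixes f :: "'a::real_inner \<Rightarrow> real"
  assumes conv: "convex_on UNIV f" and grad: "\<And>y. (f has_derivative (\<lambda>h. g y \<bullet> h)) (at y)"
  shows "f y \<ge> f z + g z \<bullet> (y - z)"
proof -
  define \<phi> where "\<phi> s = f (z + s *\<^sub>R (y - z))" for s :: real
  have c\<phi>: "convex_on UNIV \<phi>"
  proof (rule convex_onI)
    fix t a b :: real assume t: "0 < t" "t < 1"
    have e: "z + ((1-t) *\<^sub>R a + t *\<^sub>R b) *\<^sub>R (y-z) = (1-t) *\<^sub>R (z + a *\<^sub>R (y-z)) + t *\<^sub>R (z + b *\<^sub>R (y - z))"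
      by (simp add: algebra_simps)
    show "\<phi> ((1-t) *\<^sub>R a + t *\<^sub>R b) \<le> (1-t) * \<phi> a + t * \<phi> b"
      unfolding \<phi>_def e using convex_onD[OF conv, of t] t by simp
  qed simp
  have vd: "((\<lambda>s::real. z + s *\<^sub>R (y - z)) has_vector_derivative (y - z)) (at 0)"
    unfolding has_vector_derivative_def by (auto intro!: derivative_eq_intros)
  have d: "(\<phi> has_real_derivative g z \<bullet> (y - z)) (at 0 within UNIV)"
    using grad_chain[OF grad vd] unfolding \<phi>_def by simp
  have "\<phi> 1 - \<phi> 0 \<ge> (g z \<bullet> (y - z)) * (1 - 0)"
    by (rule convex_on_imp_above_tangent[OF c\<phi> _ _ _ d]) auto
  then show ?thesis unfolding \<phi>_def by simp
qed

lemma descent: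
  fixes f :: "'a::real_inner \<Rightarrow> real"
  assumes grad: "\<And>y. (f has_derivative (\<lambda>h. g y \<bullet> h)) (at y)"
    and lip: "\<And>y z. norm (g y - g z) \<le> L * norm (y - z)"
  shows "f (y + h) \<le> f y + g y \<bullet> h + L/2 * (norm h)^2"
proof -
  define \<phi> where "\<phi> s = f (y + s *\<^sub>R h) - s * (g y \<bullet> h) - L/2 * s^2 * (norm h)^2" for s::real
  have "\<phi> 1 \<le> \<phi> 0"
  proof (rule DERIV_nonpos_imp_nonincreasing[of 0 1 \<phi>])
    fix s :: real assume s: "0 \<le> s" "s \<le> 1"
    have vd: "((\<lambda>s::real. y + s *\<^sub>R h) has_vector_derivative h) (at s)"
      unfolding has_vector_derivative_def by (auto intro!: derivative_eq_intros)
    have d1: "((\<lambda>s. f (y + s *\<^sub>R h)) has_real_derivative g (y + s *\<^sub>R h) \<bullet> h) (at s)"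
      using grad_chain[OF grad vd] by simp
    have d2: "((\<lambda>s. s * (g y \<bullet> h)) has_real_derivative 1 * (g y \<bullet> h)) (at s)"
      by (rule DERIV_cmult_right[OF DERIV_ident])
    have d3: "((\<lambda>s. L/2 * s^2 * (norm h)^2) has_real_derivative (L/2 * (real 2 * s^(2 - Suc 0))) * (norm h)^2) (at s)"
      by (rule DERIV_cmult_right[OF DERIV_cmult[OF DERIV_pow]])
    have "(\<phi> has_real_derivative (g (y + s *\<^sub>R h) \<bullet> h - 1 * (g y \<bullet> h) - (L/2 * (real 2 * s^(2 - Suc 0))) * (norm h)^2)) (at s)"
      unfolding \<phi>_def[abs_def] by (rule DERIV_diff[OF DERIV_diff[OF d1 d2] d3])
    then have "(\<phi> has_real_derivative (g (y + s *\<^sub>R h) \<bullet> h - g y \<bullet> h - L * s * (norm h)^2)) (at s)"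
      by (rule DERIV_cong) simp
    moreover have "g (y + s *\<^sub>R h) \<bullet> h - g y \<bullet> h - L * s * (norm h)^2 \<le> 0"
    proof -
      have "g (y + s *\<^sub>R h) \<bullet> h - g y \<bullet> h = (g (y + s *\<^sub>R h) - g y) \<bullet> h" by (simp add: inner_diff_left)
      also have "\<dots> \<le> norm (g (y + s *\<^sub>R h) - g y) * norm h" by (rule norm_cauchy_schwarz)
      also have "\<dots> \<le> L * norm (s *\<^sub>R h) * norm h"
        using lip[of "y + s *\<^sub>R h" y] by (intro mult_right_mono) auto
      also have "\<dots> = L * s * (norm h)^2" using s by (simp add: power2_eq_square)
      finally show ?thesis by simp
    qed
    ultimately show "\<exists>y. (\<phi> has_real_derivative y) (at s) \<and> y \<le> 0" by blast
  qed simp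
  then show ?thesis unfolding \<phi>_def by simp
qed

lemma grad_bound:
  fixes f :: "'a::real_inner \<Rightarrow> real"
  assumes grad: "\<And>y. (f has_derivative (\<lambda>h. g y \<bullet> h)) (at y)"
    and lip: "\<And>y z. norm (g y - g z) \<le> L * norm (y - z)"
    and L: "L > 0" and mn: "\<And>y. fs \<le> f y"
  shows "(norm (g y))^2 \<le> 2 * L * (f y - fs)"
proof -
  have "fs \<le> f (y + (- (1/L)) *\<^sub>R g y)" by (rule mn)
  also have "\<dots> \<le> f y + g y \<bullet> ((- (1/L)) *\<^sub>R g y) + L/2 * (norm ((- (1/L)) *\<^sub>R g y))^2"
    by (rule descent[OF grad lip])
  also have "\<dots> = f y - (norm (g y))^2 / (2 * L)"
    using L by (simp add: power2_norm_eq_inner[symmetric] power_mult_distrib field_simps power2_eq_square)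
  finally show ?thesis using L by (simp add: field_simps)
qed

lemma integral_deriv_at:
  fixes h :: "real \<Rightarrow> real"
  assumes "continuous_on {a..} h" "a < t"
  shows "((\<lambda>u. integral {a..u} h) has_real_derivative h t) (at t)"
proof -
  have "((\<lambda>u. integral {a..u} h) has_real_derivative h t) (at t within {a..t+1})"
    by (rule integral_has_real_derivative) (use assms in \<open>auto intro: continuous_on_subset\<close>)
  moreover have "t \<in> interior {a..t+1}" using assms by auto
  then have "at t within {a..t+1} = at t" by (rule at_within_interior)
  ultimately show ?thesis by (simp only:)
qed

lemma nn_fin:
  fixes h :: "real \<Rightarrow> real"
  assumes cont: "continuous_on {a..} h" and nn: "\<And>t. t \<ge> a \<Longrightarrow> h t \<ge> 0"
    and C: "\<And>t. t \<ge> a \<Longrightarrow> integral {a..t} h \<le> C"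
  shows "(\<integral>\<^sup>+ t\<in>{a..}. ennreal (h t) \<partial>lborel) < \<infinity>"
proof -
  define H where "H t = h (max t a)" for t
  have Hc: "continuous_on UNIV H"
    unfolding H_def by (rule continuous_on_compose2[OF cont]) (auto intro!: continuous_intros)
  have Hm[measurable]: "H \<in> borel_measurable borel" by (rule borel_measurable_continuous_onI[OF Hc])
  have eq: "(\<integral>\<^sup>+ t\<in>{a..}. ennreal (h t) \<partial>lborel) = (\<integral>\<^sup>+ t\<in>{a..}. ennreal (H t) \<partial>lborel)"
    by (rule nn_integral_cong) (auto simp: H_def split: split_indicator)
  have sup: "ennreal (H t) * indicator {a..} t = (SUP n::nat. ennreal (H t) * indicator {a..a + real n} t)" for t
  proof (cases "t \<ge> a")
    case True
    obtain n::nat where n: "t - a \<le> real n" using real_arch_simple by blast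
    have "(SUP n::nat. ennreal (H t) * indicator {a..a + real n} t) = ennreal (H t)"
    proof (rule antisym)
      show "(SUP n::nat. ennreal (H t) * indicator {a..a + real n} t) \<le> ennreal (H t)"
        by (rule SUP_least) (auto split: split_indicator)
      show "ennreal (H t) \<le> (SUP n::nat. ennreal (H t) * indicator {a..a + real n} t)"
        by (rule SUP_upper2[of n]) (use True n in auto)
    qed
    then show ?thesis using True by simp
  next
    case False then show ?thesis by simp
  qed
  have "(\<integral>\<^sup>+ t\<in>{a..}. ennreal (H t) \<partial>lborel) = (\<integral>\<^sup>+ t. (SUP n::nat. ennreal (H t) * indicator {a..a + real n} t) \<partial>lborel)"
    by (rule nn_integral_cong) (rule sup)
  also have "\<dots> = (SUP n::nat. (\<integral>\<^sup>+ t. ennreal (H t) * indicator {a..a + real n} t \<partial>lborel))"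
    by (rule nn_integral_monotone_convergence_SUP)
       (auto simp: incseq_def le_fun_def split: split_indicator)
  also have "\<dots> \<le> ennreal C"
  proof (rule SUP_least)
    fix n :: nat
    have hi: "(H has_integral integral {a..a + real n} H) {a..a + real n}"
      by (rule integrable_integral, rule integrable_continuous_interval, rule continuous_on_subset[OF Hc]) auto
    have "(\<integral>\<^sup>+ t\<in>{a..a + real n}. ennreal (H t) \<partial>lborel) = ennreal (integral {a..a + real n} H)"
      by (rule nn_integral_has_integral_lebesgue'[OF _ hi]) (auto simp: H_def nn)
    also have "integral {a..a + real n} H = integral {a..a + real n} h"
      by (rule integral_cong) (auto simp: H_def)
    also have "ennreal (integral {a..a + real n} h) \<le> ennreal C"
      by (rule ennreal_leI) (rule C, simp)
    finally show "(\<integral>\<^sup>+ t\<in>{a..a + real n}. ennreal (H t) \<partial>lborel) \<le> ennreal C" .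
  qed
  finally show ?thesis unfolding eq by (simp add: le_less_trans)
qed

lemma nn_to_int:
  fixes h k :: "real \<Rightarrow> real"
  assumes cont: "continuous_on {a..} h" and nn: "\<And>t. t \<ge> a \<Longrightarrow> 0 \<le> h t"
    and fin: "(\<integral>\<^sup>+ t\<in>{a..}. ennreal (k t) \<partial>lborel) < \<infinity>"
    and le: "\<And>t. t \<ge> a \<Longrightarrow> h t \<le> k t"
  shows "\<exists>M. \<forall>t\<ge>a. integral {a..t} h \<le> M"
proof (intro exI allI impI)
  fix t assume t: "a \<le> t"
  have hi: "(h has_integral integral {a..t} h) {a..t}"
    by (rule integrable_integral, rule integrable_continuous_interval, rule continuous_on_subset[OF cont]) auto
  have "ennreal (integral {a..t} h) = (\<integral>\<^sup>+ s\<in>{a..t}. ennreal (h s) \<partial>lborel)"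
    by (rule nn_integral_has_integral_lebesgue'[OF _ hi, symmetric]) (auto simp: nn)
  also have "\<dots> \<le> (\<integral>\<^sup>+ s\<in>{a..}. ennreal (k s) \<partial>lborel)"
    by (rule nn_integral_mono) (auto split: split_indicator intro!: ennreal_leI le)
  finally have "enn2real (ennreal (integral {a..t} h)) \<le> enn2real (\<integral>\<^sup>+ s\<in>{a..}. ennreal (k s) \<partial>lborel)"
    using fin by (intro enn2real_mono) auto
  moreover have "integral {a..t} h \<ge> 0" by (rule integral_nonneg[OF integrable_continuous_interval]) (use cont nn in \<open>auto intro: continuous_on_subset\<close>)
  ultimately show "integral {a..t} h \<le> enn2real (\<integral>\<^sup>+ s\<in>{a..}. ennreal (k s) \<partial>lborel)" by simp
qed


lemma A_deriv:
  fixes t \<alpha> \<gamma> \<beta> c :: real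
  assumes "t^2 - \<alpha>*\<gamma>*t - (\<alpha>+1)*\<beta> > 0"
  shows "((\<lambda>t. t^2 * (t^2 - c*\<gamma>*t - c*\<beta>) / (t^2 - \<alpha>*\<gamma>*t - (\<alpha>+1)*\<beta>)) has_real_derivative
    ((2*t*(t^2 - c*\<gamma>*t - c*\<beta>) + t^2*(2*t - c*\<gamma>)) * (t^2 - \<alpha>*\<gamma>*t - (\<alpha>+1)*\<beta>) - t^2 * (t^2 - c*\<gamma>*t - c*\<beta>) * (2*t - \<alpha>*\<gamma>)) / (t^2 - \<alpha>*\<gamma>*t - (\<alpha>+1)*\<beta>)^2) (at t)"
proof -
  have 1: "((\<lambda>t. t^2 * (t^2 - c*\<gamma>*t - c*\<beta>)) has_real_derivative (2*t*(t^2 - c*\<gamma>*t - c*\<beta>) + t^2*(2*t - c*\<gamma>))) (at t)"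
    apply (rule derivative_eq_intros refl)+
    by (simp add: algebra_simps)
  have 2: "((\<lambda>t. t^2 - \<alpha>*\<gamma>*t - (\<alpha>+1)*\<beta>) has_real_derivative (2*t - \<alpha>*\<gamma>)) (at t)"
    apply (rule derivative_eq_intros refl)+
    by (simp add: algebra_simps)
  have P: "t^2 - \<alpha>*\<gamma>*t - (\<alpha>+1)*\<beta> \<noteq> 0" using assms by simp
  show ?thesis using DERIV_divide[OF 1 2 P] by (simp add: power2_eq_square)
qed




lemma Apq:
  fixes \<alpha> t \<gamma> \<beta> c :: real
  assumes P: "t^2 - \<alpha>*\<gamma>*t - (\<alpha>+1)*\<beta> > 0" and tpos: "t > 0"
  shows "(t^2 * (t^2 - c*\<gamma>*t - c*\<beta>) / (t^2 - \<alpha>*\<gamma>*t - (\<alpha>+1)*\<beta>)) * (1 - \<alpha>*(\<gamma> + \<beta>/t)/t - \<beta>/t^2) = t^2 - c*t*(\<gamma> + \<beta>/t)"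
proof -
  have 1: "1 - \<alpha>*(\<gamma> + \<beta>/t)/t - \<beta>/t^2 = (t^2 - \<alpha>*\<gamma>*t - (\<alpha>+1)*\<beta>) / t^2"
    using tpos by (simp add: field_simps power2_eq_square)
  have 2: "t^2 - c*t*(\<gamma> + \<beta>/t) = t^2 - c*\<gamma>*t - c*\<beta>"
    using tpos by (simp add: field_simps)
  have 3: "\<And>P Q. P \<noteq> 0 \<Longrightarrow> t^2 * Q / P * (P / t^2) = (Q::real)"
    using tpos by (simp add: field_simps)
  show ?thesis unfolding 1 2 using P by (intro 3) simp
qed

lemma ident_alg:
  fixes Ad F Gz A uu yw t c bf Gw GG Ge \<alpha> Gy ye ww we Gzx ue \<xi> :: real
  assumes i1': "Gz * A = (t^2 - c*t*bf) * Gw - A * bf * GG - A * bf * Ge"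
  and i2: "uu = c*(c+1-\<alpha>)*yw - c*t*Gy - c*t*ye + t*(c+1-\<alpha>)*ww - t^2*Gw - t^2 * we"
  and i3: "Gzx = Gy + bf * Gw" and i4: "ue = c * ye + t * we" and xi: "\<xi> = c*(\<alpha>-1-c)"
  shows "Ad * F + Gz * A + 2 * uu / 2 + \<xi> / 2 * (2 * yw) = (Ad - c*t) * F - A * bf * GG - t*(\<alpha>-1-c)*ww
        - c*t*(Gzx - F) - A * bf * Ge - t * ue"
  unfolding i1' i2 i3 i4 xi by (simp add: field_simps power2_eq_square)

theorem theorem7:
  fixes f :: "'a :: {real_inner, complete_space} \<Rightarrow> real"
    and g :: "'a \<Rightarrow> 'a"
    and x x' x'' e :: "real \<Rightarrow> 'a"
    and t0 L \<alpha> \<gamma> \<beta> b :: real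
  assumes t0_pos: "t0 > 0"
    and f_convex: "convex_on UNIV f"
    and f_grad: "\<And>y. (f has_derivative (\<lambda>h. g y \<bullet> h)) (at y)"
    and g_lipschitz: "\<And>y z. norm (g y - g z) \<le> L * norm (y - z)"
    and f_argmin_nonempty: "\<exists>z. \<forall>y. f z \<le> f y"
    and \<alpha>_gt: "\<alpha> > 3" and \<gamma>_pos: "\<gamma> > 0" and \<beta>_nonneg: "\<beta> \<ge> 0"
    and b_pos: "0 < b" and b_le: "b \<le> \<alpha> - 1"
    and e_cont: "continuous_on {t0..} e"
    and e_L1: "(\<integral>\<^sup>+ t\<in>{t0..}. ennreal (m_fun L \<alpha> \<gamma> \<beta> b t * norm (e t)) \<partial>lborel) < \<infinity>"
    and x_deriv: "\<And>t. t \<ge> t0 \<Longrightarrow> (x has_vector_derivative x' t) (at t within {t0..})"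
    and x'_deriv: "\<And>t. t \<ge> t0 \<Longrightarrow> (x' has_vector_derivative x'' t) (at t within {t0..})"
    and ode: "\<And>t. t \<ge> t0 \<Longrightarrow>
       x'' t + (\<alpha> / t) *\<^sub>R x' t + g (x t + beta_fun \<gamma> \<beta> t *\<^sub>R x' t) + e t = 0"
  shows "((\<lambda>t. f (x t + beta_fun \<gamma> \<beta> t *\<^sub>R x' t) - (INF y. f y)) \<in> O[at_top](\<lambda>t. 1 / t^2)) \<and>
     ((\<lambda>t. norm (x' t)) \<in> O[at_top](\<lambda>t. 1 / t)) \<and>
     ((\<integral>\<^sup>+ t\<in>{t0..}. ennreal (t * (f (x t) - (INF y. f y))) \<partial>lborel) < \<infinity>) \<and>
     ((\<integral>\<^sup>+ t\<in>{t0..}. ennreal (t^2 * (norm (g (x t + beta_fun \<gamma> \<beta> t *\<^sub>R x' t)))^2) \<partial>lborel) < \<infinity>) \<and>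
     ((\<integral>\<^sup>+ t\<in>{t0..}. ennreal (t * (norm (x' t))^2) \<partial>lborel) < \<infinity>)"
proof -
  obtain xs where xs: "\<And>y. f xs \<le> f y" using f_argmin_nonempty by blast
  define fs where "fs = f xs"
  have fs_le: "\<And>y. fs \<le> f y" using xs by (simp add: fs_def)
  have INF_eq: "(INF y. f y) = fs"
    unfolding fs_def by (rule antisym[OF cINF_lower cINF_greatest]) (auto intro: xs simp: bdd_below_def)
  define L1 where "L1 = max L 1"
  have L1pos: "L1 > 0" by (simp add: L1_def)
  have lipL1: "norm (g y - g z) \<le> L1 * norm (y - z)" for y z
    by (rule order_trans[OF g_lipschitz]) (simp add: L1_def mult_right_mono)
  define c where "c = (\<alpha>+1)/2"
  define \<xi> where "\<xi> = c * (\<alpha> - 1 - c)"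
  have \<xi>pos: "\<xi> > 0" unfolding \<xi>_def c_def using \<alpha>_gt by (intro mult_pos_pos) (auto simp: field_simps)
  define bf where "bf t = beta_fun \<gamma> \<beta> t" for t
  define Bm where "Bm = \<gamma> + \<beta> / t0"
  define z where "z t = x t + bf t *\<^sub>R x' t" for t
  define F where "F t = f (z t) - fs" for t
  define G where "G t = g (z t)" for t
  define y where "y t = x t - xs" for t
  define u where "u t = c *\<^sub>R y t + t *\<^sub>R x' t" for t
  define P where "P t = t^2 - \<alpha>*\<gamma>*t - (\<alpha>+1)*\<beta>" for t
  define Q where "Q t = t^2 - c*\<gamma>*t - c*\<beta>" for t
  define A where "A t = t^2 * Q t / P t" for t
  define Ad where "Ad t = ((2*t*Q t + t^2*(2*t - c*\<gamma>)) * P t - t^2 * Q t * (2*t - \<alpha>*\<gamma>)) / (P t)^2" for t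
  define E where "E t = A t * F t + (u t \<bullet> u t)/2 + \<xi>/2 * (y t \<bullet> y t)" for t
  define h where "h t = t * norm (e t)" for t
  define \<kappa> where "\<kappa> = min ((\<alpha>-3)/4) (\<gamma>/2)"
  have \<kappa>pos: "\<kappa> > 0" using \<alpha>_gt \<gamma>_pos by (simp add: \<kappa>_def)
  define D where "D t = \<kappa> * (t * F t + t^2 * (norm (G t))^2 + t * (norm (x' t))^2)" for t
  define K1 where "K1 = 2 * Bm * sqrt L1"
  define K where "K = K1 + sqrt 2"
  have ev: "eventually (\<lambda>t. P t > 0 \<and> A t \<ge> t^2/2 \<and> A t \<le> 2*t^2 \<and> Ad t \<le> (c+2)/2 * t) at_top"
    unfolding P_def A_def Q_def Ad_def c_def using \<alpha>_gt \<gamma>_pos \<beta>_nonneg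
    by (intro eventually_conj; real_asymp)
  then obtain T0 where T0: "\<And>t. t \<ge> T0 \<Longrightarrow> P t > 0 \<and> A t \<ge> t^2/2 \<and> A t \<le> 2*t^2 \<and> Ad t \<le> (c+2)/2 * t"
    by (auto simp: eventually_at_top_linorder)
  define T where "T = max T0 (max (t0+1) 1)"
  have T_ge: "T \<ge> t0 + 1" "T \<ge> 1" "T \<ge> T0" by (auto simp: T_def)
  have Fnn: "F t \<ge> 0" for t using fs_le by (simp add: F_def)
  have bf_ge: "bf t \<ge> \<gamma>" if "t > 0" for t using that \<beta>_nonneg by (simp add: bf_def beta_fun_def)
  have bf_le: "bf t \<le> Bm" if "t \<ge> t0" for t using that \<beta>_nonneg t0_pos
    by (simp add: bf_def beta_fun_def Bm_def frac_le)
  have Bm_pos: "Bm > 0" using \<gamma>_pos \<beta>_nonneg t0_pos by (simp add: Bm_def add_pos_nonneg)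
  have xc: "continuous_on {t0..} x"
    using x_deriv by (auto simp: continuous_on_eq_continuous_within intro: has_vector_derivative_continuous)
  have x'c: "continuous_on {t0..} x'"
    using x'_deriv by (auto simp: continuous_on_eq_continuous_within intro: has_vector_derivative_continuous)
  have fc: "continuous_on UNIV f"
    using f_grad by (auto intro!: continuous_at_imp_continuous_on has_derivative_continuous)
  have gc: "continuous_on UNIV g"
    by (rule lipschitz_on_continuous_on[of L1]) (auto intro!: lipschitz_onI simp: dist_norm lipL1 less_imp_le[OF L1pos])
  have bfc: "continuous_on {t0..} bf"
    unfolding bf_def beta_fun_def using t0_pos by (auto intro!: continuous_intros)
  have zc: "continuous_on {t0..} z"
    unfolding z_def by (intro continuous_intros xc x'c bfc)
  have Fc: "continuous_on {t0..} F"
    unfolding F_def by (intro continuous_intros continuous_on_compose2[OF fc zc]) auto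
  have Gc: "continuous_on {t0..} G"
    unfolding G_def by (rule continuous_on_compose2[OF gc zc]) auto
  have Dc: "continuous_on {t0..} D"
    unfolding D_def by (intro continuous_intros Fc Gc x'c)
  have hc: "continuous_on {t0..} h"
    unfolding h_def by (intro continuous_intros e_cont)
  have hnn: "h t \<ge> 0" if "t \<ge> t0" for t using that t0_pos by (simp add: h_def)

  have key: "\<exists>E'. (E has_real_derivative E') (at t) \<and> E' \<le> - D t + K * h t * sqrt (E t)"
    and Enn: "E t \<ge> 0" and AFE: "A t * F t \<le> E t" and uE: "u t \<bullet> u t \<le> 2 * E t"
    and yE: "\<xi> * (y t \<bullet> y t) \<le> 2 * E t" and Apos: "A t \<ge> t^2/2" "A t \<le> 2*t^2"
    if tT: "t \<ge> T" for t
  proof -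
    have tt0: "t > t0" and t1: "t \<ge> 1" and tpos: "t > 0" using tT T_ge t0_pos by auto
    have PA: "P t > 0" "A t \<ge> t^2/2" "A t \<le> 2*t^2" "Ad t \<le> (c+2)/2 * t" using T0[of t] tT T_ge by auto
    have Ann: "A t \<ge> 0" using PA(2) zero_le_power2[of t] by linarith
    show "A t \<ge> t^2/2" "A t \<le> 2*t^2" using PA by auto
    have AFE: "A t * F t \<le> E t" using \<xi>pos unfolding E_def by (simp add: add_nonneg_nonneg)
    then show "A t * F t \<le> E t" .
    show Enn: "E t \<ge> 0" using \<xi>pos Ann Fnn[of t] unfolding E_def by (simp add: add_nonneg_nonneg)
    show uE: "u t \<bullet> u t \<le> 2 * E t" using \<xi>pos Ann Fnn[of t] unfolding E_def by simp
    show yE: "\<xi> * (y t \<bullet> y t) \<le> 2 * E t" using \<xi>pos Ann Fnn[of t] unfolding E_def by simp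
    have tint: "t \<in> interior {t0..}" using tt0 by simp
    have atE: "at t within {t0..} = at t" by (rule at_within_interior[OF tint])
    have hx: "(x has_vector_derivative x' t) (at t)"
      using x_deriv[of t] tt0 unfolding atE by simp
    have hx': "(x' has_vector_derivative x'' t) (at t)"
      using x'_deriv[of t] tt0 unfolding atE by simp
    have hbf: "(bf has_real_derivative (- \<beta> / t^2)) (at t)"
    proof -
      have "((\<lambda>s. \<gamma> + \<beta> / s) has_real_derivative (0 + (0 * t - \<beta> * 1) / (t * t))) (at t)"
        by (rule DERIV_add[OF DERIV_const DERIV_divide[OF DERIV_const DERIV_ident]]) (use tpos in simp)
      then show ?thesis unfolding bf_def[abs_def] beta_fun_def by (simp add: power2_eq_square)
    qed
    define z' where "z' = x' t + (bf t *\<^sub>R x'' t + (- \<beta> / t^2) *\<^sub>R x' t)"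
    have hz: "(z has_vector_derivative z') (at t)"
      unfolding z_def[abs_def] z'_def
      by (rule has_vector_derivative_add[OF hx has_vector_derivative_scaleR[OF hbf hx']])
    have hF: "(F has_real_derivative (G t \<bullet> z')) (at t)"
      unfolding F_def[abs_def] G_def using DERIV_diff[OF grad_chain[OF f_grad hz] DERIV_const[of fs]] by simp
    define u' where "u' = c *\<^sub>R x' t + (t *\<^sub>R x'' t + 1 *\<^sub>R x' t)"
    have hy: "(y has_vector_derivative x' t) (at t)"
      unfolding y_def[abs_def] using has_vector_derivative_diff[OF hx has_vector_derivative_const[of xs]] by simp
    have hid: "((\<lambda>s. s) has_real_derivative 1) (at t)" by (rule DERIV_ident)
    have hu: "(u has_vector_derivative u') (at t)"
      unfolding u_def[abs_def] u'_def
      by (rule has_vector_derivative_add[OF has_vector_derivative_scaleR[OF DERIV_const hy, simplified]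
            has_vector_derivative_scaleR[OF hid hx']])
    have hA: "(A has_real_derivative Ad t) (at t)"
      unfolding A_def[abs_def] Ad_def P_def Q_def using A_deriv[OF PA(1)[unfolded P_def]] .
    have hV: "((\<lambda>s. u s \<bullet> u s) has_real_derivative 2 * (u t \<bullet> u')) (at t)" by (rule inner_sq_deriv[OF hu])
    have hY: "((\<lambda>s. y s \<bullet> y s) has_real_derivative 2 * (y t \<bullet> x' t)) (at t)" by (rule inner_sq_deriv[OF hy])
    define E' where "E' = Ad t * F t + (G t \<bullet> z') * A t + 2 * (u t \<bullet> u') / 2 + \<xi> / 2 * (2 * (y t \<bullet> x' t))"
    have hE: "(E has_real_derivative E') (at t)"
      unfolding E_def[abs_def] E'_def
      by (rule DERIV_add[OF DERIV_add[OF DERIV_mult[OF hA hF] DERIV_cdivide[OF hV]] DERIV_cmult[OF hY]])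
    have ode': "x'' t = - ((\<alpha>/t) *\<^sub>R x' t + (G t + e t))"
    proof -
      have "x'' t + ((\<alpha>/t) *\<^sub>R x' t + (G t + e t)) = 0"
        using ode[of t] tt0 unfolding G_def z_def bf_def by (simp add: add.assoc)
      then show ?thesis by (rule iffD2[OF eq_neg_iff_add_eq_0])
    qed
    have z'e: "z' = (1 - \<alpha>*bf t/t - \<beta>/t^2) *\<^sub>R x' t - bf t *\<^sub>R G t - bf t *\<^sub>R e t"
      unfolding z'_def ode' by (simp add: algebra_simps)
    have u'e: "u' = (c+1-\<alpha>) *\<^sub>R x' t - t *\<^sub>R G t - t *\<^sub>R e t"
      unfolding u'_def ode' using tpos by (simp add: algebra_simps)
    have zx: "z t - xs = y t + bf t *\<^sub>R x' t" by (simp add: z_def y_def)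
    have i1: "G t \<bullet> z' = (1 - \<alpha>*bf t/t - \<beta>/t^2) * (G t \<bullet> x' t) - bf t * (G t \<bullet> G t) - bf t * (G t \<bullet> e t)"
      unfolding z'e by (simp add: inner_diff_right)
    have i2: "u t \<bullet> u' = c*(c+1-\<alpha>)*(y t \<bullet> x' t) - c*t*(G t \<bullet> y t) - c*t*(y t \<bullet> e t) + t*(c+1-\<alpha>)*(x' t \<bullet> x' t) - t^2*(G t \<bullet> x' t) - t^2 * (x' t \<bullet> e t)"
      unfolding u'e u_def by (simp add: inner_diff_right inner_add_left algebra_simps power2_eq_square inner_commute)
    have i3: "G t \<bullet> (z t - xs) = G t \<bullet> y t + bf t * (G t \<bullet> x' t)"
      unfolding zx by (simp add: inner_add_right)
    have i4: "u t \<bullet> e t = c * (y t \<bullet> e t) + t * (x' t \<bullet> e t)"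
      unfolding u_def by (simp add: inner_add_left)
    have hApq: "A t * (1 - \<alpha>*bf t/t - \<beta>/t^2) = t^2 - c*t*bf t"
      using Apq[OF PA(1)[unfolded P_def] tpos, of c] unfolding A_def Q_def P_def bf_def beta_fun_def .
    have i1': "(G t \<bullet> z') * A t = (t^2 - c*t*bf t) * (G t \<bullet> x' t) - A t * bf t * (G t \<bullet> G t) - A t * bf t * (G t \<bullet> e t)"
    proof -
      have "(G t \<bullet> z') * A t = (A t * (1 - \<alpha>*bf t/t - \<beta>/t^2)) * (G t \<bullet> x' t) - A t * bf t * (G t \<bullet> G t) - A t * bf t * (G t \<bullet> e t)"
        unfolding i1 by (simp add: algebra_simps)
      then show ?thesis unfolding hApq .
    qed
    have ident: "E' = (Ad t - c*t) * F t - A t * bf t * (G t \<bullet> G t) - t*(\<alpha>-1-c)*(x' t \<bullet> x' t)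
        - c*t*(G t \<bullet> (z t - xs) - F t) - A t * bf t * (G t \<bullet> e t) - t * (u t \<bullet> e t)"
      unfolding E'_def by (rule ident_alg[OF i1' i2 i3 i4 \<xi>_def])
    have conv: "G t \<bullet> (z t - xs) \<ge> F t"
      using convex_tangent[OF f_convex f_grad, where y = xs and z = "z t"] unfolding F_def G_def fs_def inner_diff_right
      by linarith
    have cpos: "c > 0" using \<alpha>_gt by (simp add: c_def)
    have \<kappa>le: "\<kappa> \<le> (\<alpha>-3)/4" "\<kappa> \<le> \<gamma>/2" unfolding \<kappa>_def by (rule min.cobounded1, rule min.cobounded2)
    have c2: "(c-2)/2 = (\<alpha>-3)/4" and c3: "\<alpha>-1-c = (\<alpha>-3)/2" by (simp_all add: c_def field_simps)
    have j1: "(Ad t - c*t) * F t \<le> - (\<kappa> * t * F t)"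
    proof -
      have "\<kappa> * t \<le> (c-2)/2 * t" using tpos \<kappa>le by (intro mult_right_mono) (auto simp: c2)
      then have "Ad t - c*t \<le> - (\<kappa> * t)" using PA(4) by (simp add: field_simps)
      then have "(Ad t - c*t) * F t \<le> (- (\<kappa> * t)) * F t" by (rule mult_right_mono[OF _ Fnn[of t]])
      then show ?thesis by simp
    qed
    have GGnn: "G t \<bullet> G t \<ge> 0" "x' t \<bullet> x' t \<ge> 0" by simp_all
    have j2: "\<kappa> * t^2 * (G t \<bullet> G t) \<le> A t * bf t * (G t \<bullet> G t)"
    proof (rule mult_right_mono[OF _ GGnn(1)])
      have "\<kappa> * t^2 \<le> (\<gamma>/2) * t^2" by (rule mult_right_mono) (auto simp: \<kappa>_def)
      also have "\<dots> = (t^2/2) * \<gamma>" by simp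
      also have "\<dots> \<le> A t * \<gamma>" using PA(2) \<gamma>_pos by (intro mult_right_mono) auto
      also have "\<dots> \<le> A t * bf t" by (rule mult_left_mono[OF bf_ge[OF tpos] Ann])
      finally show "\<kappa> * t^2 \<le> A t * bf t" .
    qed
    have j3: "\<kappa> * t * (x' t \<bullet> x' t) \<le> t*(\<alpha>-1-c)*(x' t \<bullet> x' t)"
    proof (rule mult_right_mono[OF _ GGnn(2)])
      show "\<kappa> * t \<le> t*(\<alpha>-1-c)" using tpos \<kappa>le \<alpha>_gt
        by (subst mult.commute) (intro mult_right_mono, auto simp: c3)
    qed
    have j4: "0 \<le> c*t*(G t \<bullet> (z t - xs) - F t)" using conv cpos tpos by simp
    have gb: "(norm (G t))^2 \<le> 2 * L1 * F t"
      using grad_bound[OF f_grad lipL1 L1pos fs_le] by (simp add: G_def F_def)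
    have bft: "0 \<le> bf t" "bf t \<le> Bm" using bf_ge[OF tpos] \<gamma>_pos bf_le[of t] tt0 by auto
    have AbG: "A t * bf t * norm (G t) \<le> K1 * t * sqrt (E t)"
    proof (rule power2_le_imp_le)
      have "(A t * bf t * norm (G t))^2 = (A t * bf t)^2 * (norm (G t))^2" by (simp add: power_mult_distrib)
      also have "\<dots> \<le> (A t * bf t)^2 * (2 * L1 * F t)" by (rule mult_left_mono[OF gb]) simp
      also have "\<dots> = (2 * L1 * (bf t)^2 * A t) * (A t * F t)" by (simp add: power2_eq_square algebra_simps)
      also have "\<dots> \<le> (2 * L1 * (bf t)^2 * A t) * E t"
        using L1pos Ann by (intro mult_left_mono[OF AFE]) simp
      also have "\<dots> = (2 * L1 * E t) * ((bf t)^2 * A t)" by (simp add: algebra_simps)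
      also have "\<dots> \<le> (2 * L1 * E t) * (Bm^2 * (2 * t^2))"
        using L1pos Enn bft Ann PA(3) by (intro mult_left_mono mult_mono power_mono) auto
      also have "\<dots> = (K1 * t * sqrt (E t))^2"
        using Enn L1pos by (simp add: K1_def power_mult_distrib)
      finally show "(A t * bf t * norm (G t))^2 \<le> (K1 * t * sqrt (E t))^2" .
      show "0 \<le> K1 * t * sqrt (E t)" using Bm_pos L1pos tpos Enn by (simp add: K1_def)
    qed
    have j5: "- (A t * bf t * (G t \<bullet> e t)) \<le> K1 * t * sqrt (E t) * norm (e t)"
    proof -
      have "- (G t \<bullet> e t) \<le> norm (G t) * norm (e t)" using Cauchy_Schwarz_ineq2[of "G t" "e t"] by linarith
      then have "(A t * bf t) * (- (G t \<bullet> e t)) \<le> (A t * bf t) * (norm (G t) * norm (e t))"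
        using Ann bft by (intro mult_left_mono) auto
      also have "\<dots> = (A t * bf t * norm (G t)) * norm (e t)" by simp
      also have "\<dots> \<le> (K1 * t * sqrt (E t)) * norm (e t)" by (rule mult_right_mono[OF AbG]) simp
      finally show ?thesis by simp
    qed
    have nu: "norm (u t) \<le> sqrt 2 * sqrt (E t)"
    proof -
      have "norm (u t) = sqrt (u t \<bullet> u t)" by (simp add: norm_eq_sqrt_inner)
      also have "\<dots> \<le> sqrt (2 * E t)" using uE by (rule real_sqrt_le_mono)
      finally show ?thesis by (simp add: real_sqrt_mult)
    qed
    have j6: "- (t * (u t \<bullet> e t)) \<le> sqrt 2 * t * sqrt (E t) * norm (e t)"
    proof -
      have "- (u t \<bullet> e t) \<le> norm (u t) * norm (e t)" using Cauchy_Schwarz_ineq2[of "u t" "e t"] by linarith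
      also have "\<dots> \<le> (sqrt 2 * sqrt (E t)) * norm (e t)" by (rule mult_right_mono[OF nu]) simp
      finally have "t * (- (u t \<bullet> e t)) \<le> t * ((sqrt 2 * sqrt (E t)) * norm (e t))"
        using tpos by (intro mult_left_mono) auto
      then show ?thesis by (simp add: algebra_simps)
    qed
    have "E' \<le> - (\<kappa> * t * F t) - \<kappa> * t^2 * (G t \<bullet> G t) - \<kappa> * t * (x' t \<bullet> x' t)
        + K1 * t * sqrt (E t) * norm (e t) + sqrt 2 * t * sqrt (E t) * norm (e t)"
      using ident j1 j2 j3 j4 j5 j6 by linarith
    also have "\<dots> = - D t + K * h t * sqrt (E t)"
      unfolding D_def h_def K_def power2_norm_eq_inner by (simp add: algebra_simps)
    finally show "\<exists>E'. (E has_real_derivative E') (at t) \<and> E' \<le> - D t + K * h t * sqrt (E t)"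
      using hE by blast
  qed

  have Dnn: "D t \<ge> 0" if "t \<ge> t0" for t
    using that t0_pos \<kappa>pos Fnn[of t] unfolding D_def by (intro mult_nonneg_nonneg add_nonneg_nonneg) auto
  have "\<exists>M. \<forall>t\<ge>t0. integral {t0..t} h \<le> M"
    by (rule nn_to_int[OF hc hnn e_L1]) (auto simp: h_def m_fun_def intro!: mult_right_mono)
  then obtain M where M: "\<And>t. t \<ge> t0 \<Longrightarrow> integral {t0..t} h \<le> M" by blast
  have Ihnn: "integral {t0..t} h \<ge> 0" if "t \<ge> t0" for t
    by (rule integral_nonneg[OF integrable_continuous_interval]) (use hc hnn in \<open>auto intro: continuous_on_subset\<close>)
  have Mnn: "M \<ge> 0" using M[of t0] Ihnn[of t0] by simp
  have Kpos: "K \<ge> 0" using Bm_pos L1pos by (simp add: K_def K1_def)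
  have TT: "T > t0" "T > 0" using T_ge t0_pos by auto
  define S where "S t = sqrt (1 + E t) - K/2 * integral {t0..t} h" for t
  have S_mono: "S t \<le> S T" if "t \<ge> T" for t
  proof (rule DERIV_nonpos_imp_nonincreasing[OF that])
    fix s assume s: "T \<le> s" "s \<le> t"
    then have st0: "s > t0" using TT by simp
    obtain E' where hE': "(E has_real_derivative E') (at s)" and E'le: "E' \<le> - D s + K * h s * sqrt (E s)"
      using key[of s] s by blast
    have Es: "E s \<ge> 0" using Enn[of s] s by simp
    define r where "r = sqrt (1 + E s)"
    have rpos: "r > 0" using Es by (simp add: r_def)
    have d1: "((\<lambda>s. 1 + E s) has_real_derivative 0 + E') (at s)" by (rule DERIV_add[OF DERIV_const hE'])
    have d2: "(sqrt has_real_derivative inverse (sqrt (1 + E s)) / 2) (at (1 + E s))"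
      by (rule DERIV_real_sqrt) (use Es in simp)
    have d3: "((\<lambda>s. sqrt (1 + E s)) has_real_derivative inverse (sqrt (1 + E s)) / 2 * (0 + E')) (at s)"
      by (rule DERIV_chain2[OF d2 d1])
    have d4: "(S has_real_derivative inverse (sqrt (1 + E s)) / 2 * (0 + E') - K/2 * h s) (at s)"
      unfolding S_def[abs_def] by (rule DERIV_diff[OF d3 DERIV_cmult[OF integral_deriv_at[OF hc st0]]])
    have "E' \<le> K * h s * sqrt (E s)" using E'le Dnn[of s] st0 by simp
    also have "\<dots> \<le> K * h s * r" unfolding r_def
      using Kpos hnn[of s] st0 by (intro mult_left_mono real_sqrt_le_mono) auto
    finally have "inverse r / 2 * E' \<le> inverse r / 2 * (K * h s * r)"
      using rpos by (intro mult_left_mono) auto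
    also have "\<dots> = K/2 * h s" using rpos by (simp add: field_simps)
    finally have "inverse (sqrt (1 + E s)) / 2 * (0 + E') - K/2 * h s \<le> 0" by (simp add: r_def)
    then show "\<exists>y. (S has_real_derivative y) (at s) \<and> y \<le> 0" using d4 by blast
  qed
  define Bs where "Bs = sqrt (1 + E T) + K/2 * M"
  define B where "B = Bs^2"
  have EB: "E t \<le> B" if "t \<ge> T" for t
  proof -
    have "sqrt (1 + E t) \<le> sqrt (1 + E T) + K/2 * (integral {t0..t} h - integral {t0..T} h)"
      using S_mono[OF that] by (simp add: S_def algebra_simps)
    also have "\<dots> \<le> Bs" unfolding Bs_def
      using M[of t] Ihnn[of T] that TT Kpos by (intro add_left_mono mult_left_mono) auto
    finally have 1: "sqrt (1 + E t) \<le> Bs" .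
    have "E t \<le> 1 + E t" by simp
    also have "\<dots> = (sqrt (1 + E t))^2" using Enn[of t] that by simp
    also have "\<dots> \<le> Bs^2" using 1 Enn[of t] that by (intro power_mono) auto
    finally show ?thesis by (simp add: B_def)
  qed
  have Bnn: "B \<ge> 0" by (simp add: B_def)
  define R where "R t = E t + integral {t0..t} D - K * sqrt B * integral {t0..t} h" for t
  have R_mono: "R t \<le> R T" if "t \<ge> T" for t
  proof (rule DERIV_nonpos_imp_nonincreasing[OF that])
    fix s assume s: "T \<le> s" "s \<le> t"
    then have st0: "s > t0" using TT by simp
    obtain E' where hE': "(E has_real_derivative E') (at s)" and E'le: "E' \<le> - D s + K * h s * sqrt (E s)"
      using key[of s] s by blast
    have d: "(R has_real_derivative E' + D s - K * sqrt B * h s) (at s)"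
      unfolding R_def[abs_def]
      by (rule DERIV_diff[OF DERIV_add[OF hE' integral_deriv_at[OF Dc st0]] DERIV_cmult[OF integral_deriv_at[OF hc st0]]])
    have "K * h s * sqrt (E s) \<le> K * h s * sqrt B"
      using Kpos hnn[of s] st0 EB[of s] s by (intro mult_left_mono real_sqrt_le_mono) auto
    then have "E' + D s - K * sqrt B * h s \<le> 0" using E'le by (simp add: algebra_simps)
    then show "\<exists>y. (R has_real_derivative y) (at s) \<and> y \<le> 0" using d by blast
  qed
  define C2 where "C2 = E T + K * sqrt B * M"
  have C2nn: "C2 \<ge> 0" using Enn[of T] Kpos Mnn Bnn by (simp add: C2_def)
  have DintT: "integral {T..t} D \<le> C2" if "t \<ge> T" for t
  proof -
    have Dint: "D integrable_on {t0..t}"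
      by (rule integrable_continuous_interval) (use Dc in \<open>auto intro: continuous_on_subset\<close>)
    have comb: "integral {t0..T} D + integral {T..t} D = integral {t0..t} D"
      by (rule Henstock_Kurzweil_Integration.integral_combine) (use that TT Dint in auto)
    have "K * sqrt B * (integral {t0..t} h - integral {t0..T} h) \<le> K * sqrt B * M"
      using M[of t] Ihnn[of T] that TT Kpos Bnn by (intro mult_left_mono) auto
    then show ?thesis using R_mono[OF that] comb Enn[of t] that unfolding R_def C2_def
      by (simp add: algebra_simps)
  qed
  have fin: "(\<integral>\<^sup>+ t\<in>{t0..}. ennreal (q t) \<partial>lborel) < \<infinity>"
    if qc: "continuous_on {t0..} q" and qnn: "\<And>t. t \<ge> t0 \<Longrightarrow> q t \<ge> 0"
      and qle: "\<And>t. t \<ge> T \<Longrightarrow> q t \<le> Kq * D t" and Kq: "Kq \<ge> 0" for q Kq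
  proof (rule nn_fin[OF qc qnn])
    fix t assume t: "t0 \<le> t"
    have qint: "q integrable_on {a..b}" if "t0 \<le> a" for a b
      by (rule integrable_continuous_interval) (use qc that in \<open>auto intro: continuous_on_subset\<close>)
    have Dint: "D integrable_on {a..b}" if "t0 \<le> a" for a b
      by (rule integrable_continuous_interval) (use Dc that in \<open>auto intro: continuous_on_subset\<close>)
    show "integral {t0..t} q \<le> integral {t0..T} q + Kq * C2"
    proof (cases "t \<le> T")
      case True
      have "integral {t0..t} q \<le> integral {t0..T} q"
        by (rule integral_subset_le) (use True qint qnn in auto)
      then show ?thesis using Kq C2nn by (simp add: add_increasing2)
    next
      case False
      have comb: "integral {t0..T} q + integral {T..t} q = integral {t0..t} q"
        by (rule Henstock_Kurzweil_Integration.integral_combine) (use False TT qint in auto)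
      have KD: "(\<lambda>s. Kq * D s) integrable_on {T..t}" using integrable_cmul[OF Dint[of T t], of Kq] TT by simp
      have "integral {T..t} q \<le> integral {T..t} (\<lambda>s. Kq * D s)"
        by (rule integral_le) (use qint KD TT qle in auto)
      also have "\<dots> = Kq * integral {T..t} D" by (rule integral_mult[symmetric]) (use Dint TT in auto)
      also have "\<dots> \<le> Kq * C2" using DintT[of t] False Kq by (intro mult_left_mono) auto
      finally show ?thesis using comb by linarith
    qed
  qed

  have xnn: "norm (x' t) ^ 2 \<ge> 0" for t by simp
  have c4: "(\<integral>\<^sup>+ t\<in>{t0..}. ennreal (t^2 * (norm (G t))^2) \<partial>lborel) < \<infinity>"
  proof (rule fin[of _ "1/\<kappa>"])
    show "continuous_on {t0..} (\<lambda>t. t^2 * (norm (G t))^2)" by (intro continuous_intros Gc)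
    show "t^2 * (norm (G t))^2 \<le> 1/\<kappa> * D t" if "t \<ge> T" for t
    proof -
      have "\<kappa> * (t^2 * (norm (G t))^2) \<le> D t"
        unfolding D_def using \<kappa>pos Fnn[of t] that TT
        by (intro mult_left_mono) (auto intro!: add_nonneg_nonneg)
      then show ?thesis using \<kappa>pos by (simp add: field_simps)
    qed
  qed (use \<kappa>pos in auto)
  have c5: "(\<integral>\<^sup>+ t\<in>{t0..}. ennreal (t * (norm (x' t))^2) \<partial>lborel) < \<infinity>"
  proof (rule fin[of _ "1/\<kappa>"])
    show "continuous_on {t0..} (\<lambda>t. t * (norm (x' t))^2)" by (intro continuous_intros x'c)
    show "t * (norm (x' t))^2 \<le> 1/\<kappa> * D t" if "t \<ge> T" for t
    proof -
      have "\<kappa> * (t * (norm (x' t))^2) \<le> D t"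
        unfolding D_def using \<kappa>pos Fnn[of t] that TT
        by (intro mult_left_mono) (auto intro!: add_nonneg_nonneg)
      then show ?thesis using \<kappa>pos by (simp add: field_simps)
    qed
  qed (use \<kappa>pos t0_pos in auto)
  define K3 where "K3 = 1 + Bm + L1 * Bm^2"
  have K3pos: "K3 > 0" using Bm_pos L1pos by (simp add: K3_def add_pos_nonneg)
  have fxc: "continuous_on {t0..} (\<lambda>t. f (x t))" by (rule continuous_on_compose2[OF fc xc]) auto
  have c3: "(\<integral>\<^sup>+ t\<in>{t0..}. ennreal (t * (f (x t) - fs)) \<partial>lborel) < \<infinity>"
  proof (rule fin[of _ "K3/\<kappa>"])
    show "continuous_on {t0..} (\<lambda>t. t * (f (x t) - fs))" by (intro continuous_intros fxc)
    show "t * (f (x t) - fs) \<le> K3/\<kappa> * D t" if tT: "t \<ge> T" for t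
    proof -
      have tpos: "t > 0" and t1: "t \<ge> 1" using tT TT T_ge by auto
      have bft: "0 \<le> bf t" "bf t \<le> Bm" using bf_ge[OF tpos] \<gamma>_pos bf_le[of t] tT TT by auto
      define n where "n = norm (G t)"
      define m where "m = norm (x' t)"
      define n' where "n' = norm (g (x t))"
      have nm: "n \<ge> 0" "m \<ge> 0" "n' \<ge> 0" by (simp_all add: n_def m_def n'_def)
      have zx: "z t - x t = bf t *\<^sub>R x' t" by (simp add: z_def)
      have a: "f (x t) - fs \<le> F t + bf t * (n' * m)"
      proof -
        have "f (x t) + g (x t) \<bullet> (z t - x t) \<le> f (z t)"
          by (rule convex_tangent[OF f_convex f_grad])
        moreover have "- (g (x t) \<bullet> (z t - x t)) \<le> bf t * (n' * m)"
        proof -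
          have "- (g (x t) \<bullet> x' t) \<le> n' * m" using Cauchy_Schwarz_ineq2[of "g (x t)" "x' t"]
            unfolding n'_def m_def by linarith
          then have "bf t * (- (g (x t) \<bullet> x' t)) \<le> bf t * (n' * m)" using bft by (intro mult_left_mono) auto
          then show ?thesis unfolding zx by simp
        qed
        ultimately show ?thesis unfolding F_def by linarith
      qed
      have b: "n' \<le> n + L1 * bf t * m"
      proof -
        have "n' \<le> n + norm (g (x t) - g (z t))" unfolding n'_def n_def G_def by (rule norm_triangle_sub)
        also have "norm (g (x t) - g (z t)) \<le> L1 * norm (x t - z t)" by (rule lipL1)
        also have "norm (x t - z t) = bf t * m" using bft unfolding m_def
          by (simp add: z_def)
        finally show ?thesis by (simp add: mult.assoc)
      qed
      have ab: "f (x t) - fs \<le> F t + bf t * n * m + L1 * (bf t)^2 * m^2"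
      proof -
        have "bf t * (n' * m) \<le> bf t * ((n + L1 * bf t * m) * m)"
          using b bft nm by (intro mult_left_mono mult_right_mono) auto
        then show ?thesis using a by (simp add: algebra_simps power2_eq_square)
      qed
      have amgm: "2 * (t * n) * m \<le> (t * n)^2 + m^2"
        using sum_squares_bound[of "t*n" m] by simp
      have c1: "t * (bf t * n * m) \<le> Bm * (t^2 * n^2 + t * m^2)"
      proof -
        have "t * (bf t * n * m) = bf t * ((t * n) * m)" by (simp add: algebra_simps)
        also have "\<dots> \<le> Bm * ((t * n) * m)" using bft nm tpos by (intro mult_right_mono) auto
        also have "(t * n) * m \<le> t^2 * n^2 + t * m^2"
        proof -
          have "m^2 \<le> t * m^2" using t1 by (simp add: mult_le_cancel_right1)
          moreover have "(t*n)*m \<le> ((t*n)^2 + m^2) / 2" using amgm by simp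
          moreover have "(t*n)*m \<ge> 0" using nm tpos by simp
          ultimately show ?thesis by (simp add: power_mult_distrib)
        qed
        then have "Bm * ((t * n) * m) \<le> Bm * (t^2 * n^2 + t * m^2)" using Bm_pos by (intro mult_left_mono) auto
        finally show ?thesis .
      qed
      have c2': "t * (L1 * (bf t)^2 * m^2) \<le> L1 * Bm^2 * (t * m^2)"
      proof -
        have "(bf t)^2 \<le> Bm^2" using bft by (intro power_mono) auto
        then have "L1 * (bf t)^2 * (t * m^2) \<le> L1 * Bm^2 * (t * m^2)"
          using L1pos tpos by (intro mult_right_mono mult_left_mono) auto
        then show ?thesis by (simp add: algebra_simps)
      qed
      have "t * (f (x t) - fs) \<le> t * (F t + bf t * n * m + L1 * (bf t)^2 * m^2)"
        using ab tpos by (intro mult_left_mono) auto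
      also have "\<dots> = t * F t + t * (bf t * n * m) + t * (L1 * (bf t)^2 * m^2)" by (simp add: algebra_simps)
      also have "\<dots> \<le> t * F t + Bm * (t^2 * n^2 + t * m^2) + L1 * Bm^2 * (t * m^2)"
        using c1 c2' by linarith
      also have "\<dots> \<le> K3 * (t * F t + t^2 * n^2 + t * m^2)"
        using Fnn[of t] tpos Bm_pos L1pos nm unfolding K3_def
        by (simp add: algebra_simps)
      also have "\<dots> = K3/\<kappa> * D t" unfolding D_def n_def m_def using \<kappa>pos by (simp add: field_simps)
      finally show ?thesis .
    qed
  qed (use fs_le t0_pos K3pos \<kappa>pos in auto)
  have c1: "F \<in> O[at_top](\<lambda>t. 1 / t^2)"
  proof (rule bigoI[of _ "2 * B"])
    show "eventually (\<lambda>t. norm (F t) \<le> 2 * B * norm (1 / t^2)) at_top"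
      using eventually_ge_at_top[of T]
    proof eventually_elim
      case (elim t)
      have tpos: "t > 0" using elim TT by auto
      have "t^2/2 * F t \<le> A t * F t" using Apos(1)[OF elim] Fnn[of t] by (rule mult_right_mono)
      also have "\<dots> \<le> B" using AFE[OF elim] EB[OF elim] by linarith
      finally have "F t \<le> 2 * B * (1 / t^2)" using tpos by (simp add: field_simps)
      then show ?case using Fnn[of t] by simp
    qed
  qed
  define K2 where "K2 = sqrt (2*B) + c * sqrt (2*B/\<xi>)"
  have c2: "(\<lambda>t. norm (x' t)) \<in> O[at_top](\<lambda>t. 1 / t)"
  proof (rule bigoI[of _ K2])
    show "eventually (\<lambda>t. norm (norm (x' t)) \<le> K2 * norm (1 / t)) at_top"
      using eventually_ge_at_top[of T]
    proof eventually_elim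
      case (elim t)
      have tpos: "t > 0" using elim TT by auto
      have cpos: "c > 0" using \<alpha>_gt by (simp add: c_def)
      have "t *\<^sub>R x' t = u t - c *\<^sub>R y t" by (simp add: u_def)
      then have "t * norm (x' t) = norm (u t - c *\<^sub>R y t)" using tpos by (metis abs_of_pos norm_scaleR)
      also have "\<dots> \<le> norm (u t) + norm (c *\<^sub>R y t)" by (rule norm_triangle_ineq4)
      also have "norm (u t) \<le> sqrt (2*B)"
      proof -
        have "norm (u t) = sqrt (u t \<bullet> u t)" by (simp add: norm_eq_sqrt_inner)
        also have "\<dots> \<le> sqrt (2*B)" using uE[OF elim] EB[OF elim] by (intro real_sqrt_le_mono) linarith
        finally show ?thesis .
      qed
      also have "norm (c *\<^sub>R y t) \<le> c * sqrt (2*B/\<xi>)"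
      proof -
        have "\<xi> * (y t \<bullet> y t) \<le> 2 * B" using yE[OF elim] EB[OF elim] by linarith
        then have "y t \<bullet> y t \<le> 2*B/\<xi>" using \<xi>pos by (simp add: field_simps)
        then have "norm (y t) \<le> sqrt (2*B/\<xi>)" by (simp add: norm_eq_sqrt_inner real_sqrt_le_mono)
        then show ?thesis using cpos by (simp add: mult_left_mono)
      qed
      finally have "t * norm (x' t) \<le> K2" by (simp add: K2_def)
      then show ?case using tpos by (simp add: field_simps)
    qed
  qed
  have eqF: "(\<lambda>t. f (x t + beta_fun \<gamma> \<beta> t *\<^sub>R x' t) - fs) = F"
    by (simp add: fun_eq_iff F_def z_def bf_def)
  show ?thesis
    unfolding INF_eq eqF using c1 c2 c3 c4 c5 by (simp add: G_def z_def bf_def)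
qed

end
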